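(* Let $H\subseteq\ell^2$ be the Hilbert cube of real sequences $x$ with $x_k\in[0,\tfrac1k]$ for all $k\in\mathbb{N}$, with the $\ell^2$ metric. Define $x=0$, $y=\tfrac12e_1+\sum_{k=2}^\infty\tfrac1k e_k$, and $z=e_1$. Then $\{x,y,z\}$ is an optimal code of size $3$ in $H$ and is unique up to isometry.
   Context: An optimal code of size $n$ is an $n$-element subset of $H$ maximizing the minimum distance between distinct points; unique up to isometry means every optimal code of size $3$ is the image of $\{x,y,z\}$ under an isometry of $H$ onto itself. $e_k$ is the $k$th standard basis vector. *)

theory Defs
  imports "HOL-Analysis.Analysis"
begin

text \<open>Real sequences are modelled as functions nat => real; coordinates are indexed
  by k >= 1 and coordinate 0 is forced to be 0 (since 1 / real 0 = 0 in Isabelle).\<close>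

definition hilbert_cube :: "(nat \<Rightarrow> real) set" where
  "hilbert_cube = {x. x 0 = 0 \<and> (\<forall>k\<ge>1. 0 \<le> x k \<and> x k \<le> 1 / real k)}"

definition l2dist :: "(nat \<Rightarrow> real) \<Rightarrow> (nat \<Rightarrow> real) \<Rightarrow> real" where
  "l2dist a b = sqrt (\<Sum>k. (a k - b k)^2)"

definition min_dist :: "(nat \<Rightarrow> real) set \<Rightarrow> real" where
  "min_dist C = Inf {l2dist a b | a b. a \<in> C \<and> b \<in> C \<and> a \<noteq> b}"

definition optimal_code :: "nat \<Rightarrow> (nat \<Rightarrow> real) set \<Rightarrow> bool" where
  "optimal_code n C \<longleftrightarrow> C \<subseteq> hilbert_cube \<and> finite C \<and> card C = n \<and>
     (\<forall>D. D \<subseteq> hilbert_cube \<and> finite D \<and> card D = n \<longrightarrow> min_dist D \<le> min_dist C)"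

definition cube_isometry :: "((nat \<Rightarrow> real) \<Rightarrow> (nat \<Rightarrow> real)) \<Rightarrow> bool" where
  "cube_isometry f \<longleftrightarrow> bij_betw f hilbert_cube hilbert_cube \<and>
     (\<forall>a\<in>hilbert_cube. \<forall>b\<in>hilbert_cube. l2dist (f a) (f b) = l2dist a b)"

definition e :: "nat \<Rightarrow> nat \<Rightarrow> real" where
  "e j = (\<lambda>k. if k = j then 1 else 0)"

definition pt_x :: "nat \<Rightarrow> real" where "pt_x = (\<lambda>k. 0)"
definition pt_y :: "nat \<Rightarrow> real" where
  "pt_y = (\<lambda>k. if k = 0 then 0 else if k = 1 then 1/2 else 1 / real k)"
definition pt_z :: "nat \<Rightarrow> real" where "pt_z = e 1"

end

theory Submission
  imports Defs
begin

definition ww :: "nat \<Rightarrow> real" where "ww k = (1 / real k)^2"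
definition WW :: real where "WW = suminf ww"
definition D2 :: "(nat \<Rightarrow> real) \<Rightarrow> (nat \<Rightarrow> real) \<Rightarrow> real" where
  "D2 a b = (\<Sum>k. (a k - b k)^2)"

lemma H_bound: "x \<in> hilbert_cube \<Longrightarrow> 0 \<le> x k \<and> x k \<le> 1 / real k"
  unfolding hilbert_cube_def by (cases "k = 0") auto

lemma sq_le: assumes "a \<in> hilbert_cube" "b \<in> hilbert_cube" shows "(a k - b k)^2 \<le> ww k"
proof -
  have "\<bar>a k - b k\<bar> \<le> 1 / real k" using H_bound[OF assms(1), of k] H_bound[OF assms(2), of k] by auto
  then have "\<bar>a k - b k\<bar>^2 \<le> (1 / real k)^2" by (rule power_mono) simp
  then show ?thesis by (simp add: ww_def)
qed

lemma ww_nonneg: "0 \<le> ww k" by (simp add: ww_def)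

lemma summable_ww: "summable ww"
proof -
  have "summable (\<lambda>n. inverse (of_nat n ^ 2 :: real))" by (rule inverse_power_summable) simp
  then show ?thesis unfolding ww_def by (simp add: power_divide inverse_eq_divide)
qed

lemma ww_partial: "sum ww {..<n+3} \<le> 7/4 - 1 / (real n + 2)"
proof (induction n)
  case 0
  have "sum ww {..<3} = ww 0 + ww 1 + ww 2" by (simp add: eval_nat_numeral)
  then show ?case by (simp add: ww_def power2_eq_square)
next
  case (Suc n)
  have "sum ww {..<Suc n + 3} = sum ww {..<Suc (n+3)}" by simp
  also have "\<dots> = sum ww {..<n+3} + ww (n+3)" by (rule sum.lessThan_Suc)
  also have "ww (n+3) \<le> 1 / (real n + 2) - 1 / (real n + 3)"
  proof -
    have e: "1 / (real n + 2) - 1 / (real n + 3) = 1 / ((real n + 2) * (real n + 3))"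
      by (simp add: field_simps)
    have "1 / ((real n + 3) * (real n + 3)) \<le> 1 / ((real n + 2) * (real n + 3))"
      by (intro divide_left_mono mult_right_mono) auto
    then show ?thesis unfolding e ww_def by (simp add: power2_eq_square add_ac)
  qed
  finally show ?case using Suc by (simp add: add_ac)
qed

lemma WW_le: "WW \<le> 7/4"
  unfolding WW_def
proof (rule suminf_le_const[OF summable_ww])
  fix n
  have "sum ww {..<n} \<le> sum ww {..<n+3}" by (rule sum_mono2) (auto simp: ww_nonneg)
  also have "\<dots> \<le> 7/4" using ww_partial[of n] by (smt (verit) of_nat_0_le_iff divide_nonneg_nonneg)
  finally show "sum ww {..<n} \<le> 7/4" .
qed

lemma summable_D2: assumes "a \<in> hilbert_cube" "b \<in> hilbert_cube"
  shows "summable (\<lambda>k. (a k - b k)^2)"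
  by (rule summable_comparison_test'[OF summable_ww, of 0]) (simp add: sq_le[OF assms])

lemma D2_bound: assumes "a \<in> hilbert_cube" "b \<in> hilbert_cube"
  shows "D2 a b \<le> WW - 1 + (a 1 - b 1)^2"
    and "D2 a b = WW - 1 + (a 1 - b 1)^2 \<longleftrightarrow> (\<forall>k. k \<noteq> 1 \<longrightarrow> (a k - b k)^2 = ww k)"
proof -
  define g where "g k = ww k - (a k - b k)^2" for k
  have sg: "summable g" unfolding g_def using summable_ww summable_D2[OF assms] by (rule summable_diff)
  have g0: "0 \<le> g k" for k using sq_le[OF assms] by (simp add: g_def)
  have G: "suminf g = WW - D2 a b" unfolding g_def WW_def D2_def
    using suminf_diff[OF summable_ww summable_D2[OF assms]] by simp
  define h where "h k = (if k = 1 then 0 else g k)" for k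
  have "(\<lambda>k. if k = 1 then g k else 0) sums g 1" by (rule sums_single)
  then have hs: "(\<lambda>k. g k - (if k = 1 then g k else 0)) sums (suminf g - g 1)"
    using sg by (intro sums_diff) (auto simp: summable_sums)
  have "h = (\<lambda>k. g k - (if k = 1 then g k else 0))" by (auto simp: h_def)
  with hs have hs': "h sums (suminf g - g 1)" by simp
  have h0: "0 \<le> h k" for k using g0 by (simp add: h_def)
  have g1: "g 1 = 1 - (a 1 - b 1)^2" by (simp add: g_def ww_def)
  have "0 \<le> suminf h" using hs' h0 by (intro suminf_nonneg) (auto simp: sums_iff)
  then have "0 \<le> suminf g - g 1" using hs' by (simp add: sums_iff)
  then show "D2 a b \<le> WW - 1 + (a 1 - b 1)^2" using G g1 by simp
  have "D2 a b = WW - 1 + (a 1 - b 1)^2 \<longleftrightarrow> suminf h = 0" using hs' G g1 by (auto simp: sums_iff)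
  also have "\<dots> \<longleftrightarrow> (\<forall>k. h k = 0)" using hs' h0 by (intro suminf_eq_zero_iff) (auto simp: sums_iff)
  also have "\<dots> \<longleftrightarrow> (\<forall>k. k \<noteq> 1 \<longrightarrow> (a k - b k)^2 = ww k)" by (auto simp: h_def g_def)
  finally show "D2 a b = WW - 1 + (a 1 - b 1)^2 \<longleftrightarrow> (\<forall>k. k \<noteq> 1 \<longrightarrow> (a k - b k)^2 = ww k)" .
qed


lemma sq_small: "\<bar>x::real\<bar> \<le> 1/2 \<Longrightarrow> x^2 \<le> 1/4"
proof -
  assume "\<bar>x\<bar> \<le> 1/2"
  then have "\<bar>x\<bar>^2 \<le> (1/2)^2" by (intro power_mono) auto
  then show ?thesis by (simp add: power2_eq_square)
qed

lemma sq_big: "x^2 \<ge> 1/4 \<Longrightarrow> \<bar>x::real\<bar> \<ge> 1/2"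
proof (rule ccontr)
  assume a: "x^2 \<ge> 1/4" "\<not> \<bar>x\<bar> \<ge> 1/2"
  then have "\<bar>x\<bar>^2 < (1/2)^2" by (intro power_strict_mono) auto
  with a show False by (simp add: power2_eq_square)
qed

lemma three_close:
  fixes u v s :: real
  assumes "0 \<le> u" "u \<le> 1" "0 \<le> v" "v \<le> 1" "0 \<le> s" "s \<le> 1"
  shows "(u-v)^2 \<le> 1/4 \<or> (v-s)^2 \<le> 1/4 \<or> (u-s)^2 \<le> 1/4"
proof -
  have "\<bar>u-v\<bar> \<le> 1/2 \<or> \<bar>v-s\<bar> \<le> 1/2 \<or> \<bar>u-s\<bar> \<le> 1/2" using assms by arith
  then show ?thesis using sq_small by blast
qed

lemma three_far:
  fixes u v s :: real
  assumes "0 \<le> u" "u \<le> 1" "0 \<le> v" "v \<le> 1" "0 \<le> s" "s \<le> 1"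
    and "(u-v)^2 \<ge> 1/4" "(v-s)^2 \<ge> 1/4" "(u-s)^2 \<ge> 1/4"
  shows "(u = 0 \<or> v = 0 \<or> s = 0) \<and> (u = 1/2 \<or> v = 1/2 \<or> s = 1/2) \<and> (u = 1 \<or> v = 1 \<or> s = 1)"
proof -
  have "\<bar>u-v\<bar> \<ge> 1/2" "\<bar>v-s\<bar> \<ge> 1/2" "\<bar>u-s\<bar> \<ge> 1/2" using sq_big assms(7-9) by auto
  then show ?thesis using assms(1-6) by arith
qed

lemma tight:
  assumes "p \<in> hilbert_cube" "q \<in> hilbert_cube" "(p k - q k)^2 = ww k"
  shows "(p k = 0 \<and> q k = 1 / real k) \<or> (p k = 1 / real k \<and> q k = 0)"
proof -
  have "p k - q k = 1 / real k \<or> p k - q k = - (1 / real k)"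
    using assms(3) unfolding ww_def by (simp add: power2_eq_iff)
  then show ?thesis using H_bound[OF assms(1), of k] H_bound[OF assms(2), of k] by auto
qed

lemma D2_nonneg: "a \<in> hilbert_cube \<Longrightarrow> b \<in> hilbert_cube \<Longrightarrow> 0 \<le> D2 a b"
  unfolding D2_def by (intro suminf_nonneg summable_D2) auto

lemma D2_sym: "D2 a b = D2 b a"
  unfolding D2_def by (simp add: power2_commute)

lemma l2_D2: "l2dist a b = sqrt (D2 a b)"
  by (simp add: l2dist_def D2_def)

lemma min_dist_le:
  assumes "D \<subseteq> hilbert_cube" "p \<in> D" "q \<in> D" "p \<noteq> q"
  shows "min_dist D \<le> l2dist p q"
  unfolding min_dist_def
proof (rule cInf_lower)
  show "l2dist p q \<in> {l2dist a b |a b. a \<in> D \<and> b \<in> D \<and> a \<noteq> b}" using assms by blast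
  show "bdd_below {l2dist a b |a b. a \<in> D \<and> b \<in> D \<and> a \<noteq> b}"
    unfolding bdd_below_def
    by (rule exI[of _ 0]) (use assms(1) in \<open>auto simp: l2_D2 intro!: D2_nonneg\<close>)
qed

lemma pair_le:
  assumes "D \<subseteq> hilbert_cube" "p \<in> D" "q \<in> D" "p \<noteq> q" "(p 1 - q 1)^2 \<le> 1/4"
  shows "min_dist D \<le> sqrt (WW - 3/4)"
proof -
  have "p \<in> hilbert_cube" "q \<in> hilbert_cube" using assms by auto
  then have "D2 p q \<le> WW - 1 + (p 1 - q 1)^2" by (rule D2_bound(1))
  then have "D2 p q \<le> WW - 3/4" using assms(5) by linarith
  then have "l2dist p q \<le> sqrt (WW - 3/4)" by (simp add: l2_D2)
  then show ?thesis using min_dist_le[OF assms(1-4)] by linarith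
qed

lemma upper:
  assumes "D \<subseteq> hilbert_cube" "card D = 3"
  shows "min_dist D \<le> sqrt (WW - 3/4)"
proof -
  obtain a b c where D: "D = {a,b,c}" "a \<noteq> b" "b \<noteq> c" "a \<noteq> c" using assms(2) card_3_iff by metis
  have H: "a \<in> hilbert_cube" "b \<in> hilbert_cube" "c \<in> hilbert_cube" using assms(1) D by auto
  have "(a 1 - b 1)^2 \<le> 1/4 \<or> (b 1 - c 1)^2 \<le> 1/4 \<or> (a 1 - c 1)^2 \<le> 1/4"
    by (rule three_close) (use H_bound[OF H(1), of 1] H_bound[OF H(2), of 1] H_bound[OF H(3), of 1] in auto)
  then show ?thesis
  proof (elim disjE)
    assume "(a 1 - b 1)^2 \<le> 1/4" then show ?thesis using pair_le[OF assms(1), of a b] D by auto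
  next
    assume "(b 1 - c 1)^2 \<le> 1/4" then show ?thesis using pair_le[OF assms(1), of b c] D by auto
  next
    assume "(a 1 - c 1)^2 \<le> 1/4" then show ?thesis using pair_le[OF assms(1), of a c] D by auto
  qed
qed

lemma pts_H: "pt_x \<in> hilbert_cube" "pt_y \<in> hilbert_cube" "pt_z \<in> hilbert_cube"
  by (auto simp: hilbert_cube_def pt_x_def pt_y_def pt_z_def e_def)

lemma pts_1: "pt_x 1 = 0" "pt_y 1 = 1/2" "pt_z 1 = 1"
  by (auto simp: pt_x_def pt_y_def pt_z_def e_def)

lemma D2_xy: "D2 pt_x pt_y = WW - 3/4"
proof -
  have "D2 pt_x pt_y = WW - 1 + (pt_x 1 - pt_y 1)^2"
    by (subst D2_bound(2)[OF pts_H(1,2)]) (auto simp: pt_x_def pt_y_def ww_def)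
  then show ?thesis by (simp add: pt_x_def pt_y_def pt_z_def e_def power2_eq_square)
qed

lemma D2_yz: "D2 pt_y pt_z = WW - 3/4"
proof -
  have "D2 pt_y pt_z = WW - 1 + (pt_y 1 - pt_z 1)^2"
    by (subst D2_bound(2)[OF pts_H(2,3)]) (auto simp: pt_z_def e_def pt_y_def ww_def)
  then show ?thesis by (simp add: pt_x_def pt_y_def pt_z_def e_def power2_eq_square)
qed

lemma D2_xz: "D2 pt_x pt_z = 1"
proof -
  have "(\<lambda>k. (pt_x k - pt_z k)^2) = (\<lambda>k. if k = 1 then (\<lambda>_. 1::real) k else 0)"
    by (auto simp: pt_x_def pt_z_def e_def)
  then show ?thesis unfolding D2_def using sums_single[of 1 "\<lambda>_. 1::real"] by (simp add: sums_iff)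
qed

lemma ours_ge: "sqrt (WW - 3/4) \<le> min_dist {pt_x, pt_y, pt_z}"
proof -
  have sep: "WW - 3/4 \<le> D2 a b" if "a \<in> {pt_x, pt_y, pt_z}" "b \<in> {pt_x, pt_y, pt_z}" "a \<noteq> b" for a b
    using that WW_le D2_xy D2_yz D2_xz D2_sym by auto
  show ?thesis unfolding min_dist_def
  proof (rule cInf_greatest)
    have "pt_x \<noteq> pt_y" using pts_1 by force
    then show "{l2dist a b |a b. a \<in> {pt_x, pt_y, pt_z} \<and> b \<in> {pt_x, pt_y, pt_z} \<and> a \<noteq> b} \<noteq> {}" by blast
  next
    fix d assume "d \<in> {l2dist a b |a b. a \<in> {pt_x, pt_y, pt_z} \<and> b \<in> {pt_x, pt_y, pt_z} \<and> a \<noteq> b}"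
    then obtain a b where "d = l2dist a b" "a \<in> {pt_x, pt_y, pt_z}" "b \<in> {pt_x, pt_y, pt_z}" "a \<noteq> b" by blast
    then show "sqrt (WW - 3/4) \<le> d" using sep[of a b] by (simp add: l2_D2)
  qed
qed


lemma construct:
  assumes H: "a \<in> hilbert_cube" "b \<in> hilbert_cube" "c \<in> hilbert_cube"
    and v: "a 1 = 0" "b 1 = 1/2" "c 1 = 1"
    and ab: "\<forall>k. k \<noteq> 1 \<longrightarrow> (a k - b k)^2 = ww k"
    and bc: "\<forall>k. k \<noteq> 1 \<longrightarrow> (b k - c k)^2 = ww k"
  shows "\<exists>f. cube_isometry f \<and> f ` {pt_x, pt_y, pt_z} = {a,b,c}"
proof -
  define f where "f u = (\<lambda>k. if 2 \<le> k \<and> a k \<noteq> 0 then 1 / real k - u k else u k)" for u :: "nat \<Rightarrow> real"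
  have ff: "f (f u) = u" for u by (auto simp: f_def)
  have fH: "f u \<in> hilbert_cube" if "u \<in> hilbert_cube" for u
    using that unfolding hilbert_cube_def f_def by auto
  have fd: "l2dist (f u) (f v) = l2dist u v" for u v
  proof -
    have "(\<lambda>k. (f u k - f v k)^2) = (\<lambda>k. (u k - v k)^2)"
      by (rule ext) (simp add: f_def power2_commute)
    then show ?thesis by (simp add: l2dist_def)
  qed
  have "bij_betw f hilbert_cube hilbert_cube"
    by (rule bij_betw_byWitness[where f' = f]) (use ff fH in auto)
  then have iso: "cube_isometry f" by (simp add: cube_isometry_def fd)
  have pos: "1 / real k \<noteq> 0" if "2 \<le> k" for k :: nat using that by simp
  have cases: "(a k = 0 \<and> b k = 1 / real k \<and> c k = 0) \<or> (a k = 1 / real k \<and> b k = 0 \<and> c k = 1 / real k)"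
    if "2 \<le> k" for k
  proof -
    have "k \<noteq> 1" using that by simp
    then have t1: "(a k = 0 \<and> b k = 1 / real k) \<or> (a k = 1 / real k \<and> b k = 0)"
      and t2: "(b k = 0 \<and> c k = 1 / real k) \<or> (b k = 1 / real k \<and> c k = 0)"
      using tight[OF H(1,2), of k] tight[OF H(2,3), of k] ab bc by auto
    show ?thesis using t1 t2 pos[OF that] by auto
  qed
  have z0: "u 0 = 0" if "u \<in> hilbert_cube" for u using that by (simp add: hilbert_cube_def)
  have k012: "k = 0 \<or> k = 1 \<or> 2 \<le> k" for k :: nat by auto
  have "f pt_x = a"
  proof
    fix k show "f pt_x k = a k"
      using k012[of k] cases[of k] z0[OF H(1)] v by (auto simp: f_def pt_x_def)
  qed
  moreover have "f pt_y = b"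
  proof
    fix k show "f pt_y k = b k"
      using k012[of k] cases[of k] z0[OF H(2)] v by (auto simp: f_def pt_y_def)
  qed
  moreover have "f pt_z = c"
  proof
    fix k show "f pt_z k = c k"
      using k012[of k] cases[of k] z0[OF H(3)] v by (auto simp: f_def pt_z_def e_def)
  qed
  ultimately show ?thesis using iso by auto
qed

theorem lemma4p20:
  shows "optimal_code 3 {pt_x, pt_y, pt_z} \<and>
    (\<forall>C. optimal_code 3 C \<longrightarrow> (\<exists>f. cube_isometry f \<and> f ` {pt_x, pt_y, pt_z} = C))"
proof
  have dist: "pt_x \<noteq> pt_y" "pt_y \<noteq> pt_z" "pt_x \<noteq> pt_z" using pts_1 by force+
  show opt: "optimal_code 3 {pt_x, pt_y, pt_z}"
    unfolding optimal_code_def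
  proof (intro conjI allI impI)
    show "{pt_x, pt_y, pt_z} \<subseteq> hilbert_cube" using pts_H by auto
    show "card {pt_x, pt_y, pt_z} = 3" using dist by simp
    fix D assume "D \<subseteq> hilbert_cube \<and> finite D \<and> card D = 3"
    then show "min_dist D \<le> min_dist {pt_x, pt_y, pt_z}" using upper ours_ge by force
  qed simp
  show "\<forall>C. optimal_code 3 C \<longrightarrow> (\<exists>f. cube_isometry f \<and> f ` {pt_x, pt_y, pt_z} = C)"
  proof (intro allI impI)
    fix C assume oc: "optimal_code 3 C"
    have oc': "C \<subseteq> hilbert_cube \<and> finite C \<and> card C = 3 \<and>
     (\<forall>D. D \<subseteq> hilbert_cube \<and> finite D \<and> card D = 3 \<longrightarrow> min_dist D \<le> min_dist C)"
      using oc unfolding optimal_code_def .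
    then have CH: "C \<subseteq> hilbert_cube" and fin: "finite C" and c3: "card C = 3" by simp_all
    have opt': "{pt_x, pt_y, pt_z} \<subseteq> hilbert_cube \<and> finite {pt_x, pt_y, pt_z} \<and> card {pt_x, pt_y, pt_z} = 3"
      using opt unfolding optimal_code_def by simp
    have ge: "min_dist {pt_x, pt_y, pt_z} \<le> min_dist C"
      using oc' opt' by simp
    have sep: "WW - 3/4 \<le> D2 p q" if "p \<in> C" "q \<in> C" "p \<noteq> q" for p q
    proof -
      have "min_dist C \<le> sqrt (D2 p q)" using min_dist_le[OF CH that] unfolding l2_D2 .
      then have "sqrt (WW - 3/4) \<le> sqrt (D2 p q)"
        using ours_ge ge by linarith
      then show ?thesis by simp
    qed
    have sep1: "(p 1 - q 1)^2 \<ge> 1/4" if "p \<in> C" "q \<in> C" "p \<noteq> q" for p q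
    proof -
      have "p \<in> hilbert_cube" "q \<in> hilbert_cube" using CH that by auto
      then have "D2 p q \<le> WW - 1 + (p 1 - q 1)^2" by (rule D2_bound(1))
      then show ?thesis using sep[OF that] by linarith
    qed
    have b1: "0 \<le> p 1 \<and> p 1 \<le> 1" if "p \<in> C" for p using H_bound[of p 1] CH that by auto
    obtain a b c where C: "C = {a,b,c}" "a \<noteq> b" "b \<noteq> c" "a \<noteq> c" using c3 card_3_iff by metis
    have ab: "a \<in> C" "b \<in> C" "c \<in> C" using C by auto
    have tf: "(a 1 = 0 \<or> b 1 = 0 \<or> c 1 = 0) \<and> (a 1 = 1/2 \<or> b 1 = 1/2 \<or> c 1 = 1/2) \<and> (a 1 = 1 \<or> b 1 = 1 \<or> c 1 = 1)"
      by (rule three_far) (use b1[OF ab(1)] b1[OF ab(2)] b1[OF ab(3)] sep1[OF ab(1,2) C(2)]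
          sep1[OF ab(2,3) C(3)] sep1[OF ab(1,3) C(4)] in auto)
    obtain a0 where m1: "a0 \<in> C" "a0 1 = 0" using tf ab by blast
    obtain b0 where m2: "b0 \<in> C" "b0 1 = 1/2" using tf ab by blast
    obtain c0 where m3: "c0 \<in> C" "c0 1 = 1" using tf ab by blast
    have m: "a0 \<in> C" "b0 \<in> C" "c0 \<in> C" "a0 1 = 0" "b0 1 = 1/2" "c0 1 = 1" using m1 m2 m3 by auto
    have d: "a0 \<noteq> b0" "b0 \<noteq> c0" "a0 \<noteq> c0"
    proof -
      show "a0 \<noteq> b0" proof assume "a0 = b0" then have "a0 1 = b0 1" by simp with m show False by simp qed
      show "b0 \<noteq> c0" proof assume "b0 = c0" then have "b0 1 = c0 1" by simp with m show False by simp qed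
      show "a0 \<noteq> c0" proof assume "a0 = c0" then have "a0 1 = c0 1" by simp with m show False by simp qed
    qed
    have "{a0,b0,c0} = C"
      by (rule card_seteq[OF fin]) (use m d c3 in auto)
    have H: "a0 \<in> hilbert_cube" "b0 \<in> hilbert_cube" "c0 \<in> hilbert_cube" using m CH by auto
    have "D2 a0 b0 = WW - 1 + (a0 1 - b0 1)^2"
    proof -
      have "(a0 1 - b0 1)^2 = 1/4" unfolding m(4,5) by (simp add: power2_eq_square)
      then show ?thesis using sep[OF m(1,2) d(1)] D2_bound(1)[OF H(1,2)] by linarith
    qed
    then have ab: "\<forall>k. k \<noteq> 1 \<longrightarrow> (a0 k - b0 k)^2 = ww k" using D2_bound(2)[OF H(1,2)] by blast
    have "D2 b0 c0 = WW - 1 + (b0 1 - c0 1)^2"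
    proof -
      have "(b0 1 - c0 1)^2 = 1/4" unfolding m(5,6) by (simp add: power2_eq_square)
      then show ?thesis using sep[OF m(2,3) d(2)] D2_bound(1)[OF H(2,3)] by linarith
    qed
    then have bc: "\<forall>k. k \<noteq> 1 \<longrightarrow> (b0 k - c0 k)^2 = ww k" using D2_bound(2)[OF H(2,3)] by blast
    show "\<exists>f. cube_isometry f \<and> f ` {pt_x, pt_y, pt_z} = C"
      using construct[OF H m(4-6) ab bc] \<open>{a0,b0,c0} = C\<close> by simp
  qed
qed

end
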